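(* Let $S$ be a finite connected poset and let $\varphi$ be a monotone random dynamical system with independent increments on $S$ whose one-point motions are irreducible (time-homogeneous) Markov chains. Then, with $T(\omega):=\inf\{t>0:\ \varphi(t,\theta_{-t}\omega)\text{ is a constant map}\}$, we have $\mathbb{P}(T<+\infty)=1$.
   Context: Let $(\Omega,\mathcal{F},\mathbb{P})$ be a probability space and $(\theta_t)_{t\in\mathbb{R}}$ a one-parameter group of $\mathbb{P}$-preserving measurable maps ($\theta_{t+s}=\theta_t\circ\theta_s$, $\theta_0=\mathrm{Id}$), jointly measurable in $(t,\omega)$. A random dynamical system (RDS) on $S$ is a measurable $\varphi:[0,\infty)\times\Omega\to S^S$ with $\varphi(0,\omega)=\mathrm{Id}$ and $\varphi(t+s,\omega)=\varphi(t,\theta_s\omega)\circ\varphi(s,\omega)$. It has independent increments if for all $0\le t_0<\dots<t_n$ the variables $\varphi(t_i-t_{i-1},\theta_{t_{i-1}}\cdot)$, $i=1,\dots,n$, are independent. One-point motions: $(\varphi(t,\cdot)(x))_{t\ge0}$, $x\in S$. The RDS is monotone if $\varphi(t,\omega)$ is an increasing map $S\to S$ for every $t\ge0$ and $\omega$. A poset is connected if any two points are joined by a finite sequence of points in which consecutive points are comparable. $\inf\emptyset=+\infty$. *)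

theory Defs
  imports "HOL-Probability.Probability"
begin

definition connected_poset :: "'a::order itself \<Rightarrow> bool" where
  "connected_poset _ \<longleftrightarrow> (\<forall>x y::'a. (\<lambda>a b. a \<le> b \<or> b \<le> a)\<^sup>*\<^sup>* x y)"

definition markov_chain_from ::
  "'w measure \<Rightarrow> (real \<Rightarrow> 'w \<Rightarrow> 'a) \<Rightarrow> 'a \<Rightarrow> (real \<Rightarrow> 'a \<Rightarrow> 'a \<Rightarrow> real) \<Rightarrow> bool" where
  "markov_chain_from M X x0 P \<longleftrightarrow>
     (\<forall>(n::nat) (t::nat \<Rightarrow> real) (xs::nat \<Rightarrow> 'a).
        t 0 = 0 \<longrightarrow> xs 0 = x0 \<longrightarrow> (\<forall>i<n. t i \<le> t (Suc i)) \<longrightarrow>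
        measure M {\<omega>\<in>space M. \<forall>i\<in>{1..n}. X (t i) \<omega> = xs i}
          = (\<Prod>i\<in>{1..n}. P (t i - t (i - 1)) (xs (i - 1)) (xs i)))"

definition irreducible_transition :: "(real \<Rightarrow> 'a \<Rightarrow> 'a \<Rightarrow> real) \<Rightarrow> bool" where
  "irreducible_transition P \<longleftrightarrow> (\<forall>y z. \<exists>t>0. P t y z > 0)"

text \<open>Coalescence time T(\<omega>) = inf{t>0. \<phi>(t,\<theta>_{-t}\<omega>) is constant}, with inf {} = +\<infinity>.\<close>
definition coalescence_time ::
  "(real \<Rightarrow> 'w \<Rightarrow> 'w) \<Rightarrow> (real \<Rightarrow> 'w \<Rightarrow> 'a \<Rightarrow> 'a) \<Rightarrow> 'w \<Rightarrow> ereal" where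
  "coalescence_time \<theta> \<phi> \<omega> =
     (INF t\<in>{t::real. t > 0 \<and> (\<exists>c. \<forall>y. \<phi> t (\<theta> (-t) \<omega>) y = c)}. ereal t)"

end

theory Submission
  imports Defs
begin

lemma indep_prod_helper:
  assumes "prob_space M"
    and ind: "prob_space.indep_vars M (\<lambda>_. count_space UNIV) X I"
    and J: "J \<subseteq> I" "J \<noteq> {}" "finite J"
  shows "measure M (\<Inter>j\<in>J. {\<omega>\<in>space M. X j \<omega> \<in> A j}) = (\<Prod>j\<in>J. measure M {\<omega>\<in>space M. X j \<omega> \<in> A j})"
proof -
  interpret prob_space M by fact
  have *: "indep_sets (\<lambda>i. { X i -` B \<inter> space M | B. B \<in> sets (count_space UNIV)}) I"
    using ind unfolding indep_vars_def2 by auto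
  have "prob (\<Inter>j\<in>J. X j -` A j \<inter> space M) = (\<Prod>j\<in>J. prob (X j -` A j \<inter> space M))"
    by (rule indep_setsD[OF * J(1) J(2) J(3)]) auto
  moreover have "\<And>j. X j -` A j \<inter> space M = {\<omega>\<in>space M. X j \<omega> \<in> A j}" by auto
  ultimately show ?thesis by simp
qed

lemma chain_lemma:
  fixes g :: "'a::order \<Rightarrow> 'a"
  assumes "(\<lambda>a b. a \<le> b \<or> b \<le> a)\<^sup>*\<^sup>* a b" and "mono g" and "g a \<noteq> g b"
  shows "\<exists>z w. g z \<noteq> g w \<and> g z \<le> g w"
  using assms
proof (induction rule: rtranclp_induct)
  case base then show ?case by simp
next
  case (step y c)
  show ?case
  proof (cases "g a = g y")
    case False then show ?thesis using step by blast
  next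
    case True
    then have "g y \<noteq> g c" using step by simp
    moreover have "g y \<le> g c \<or> g c \<le> g y" using step(2) \<open>mono g\<close> by (auto dest: monoD)
    ultimately show ?thesis by (metis eq_commute)
  qed
qed

theorem mainTheorem5:
  fixes M :: "'w measure"
    and \<theta> :: "real \<Rightarrow> 'w \<Rightarrow> 'w"
    and \<phi> :: "real \<Rightarrow> 'w \<Rightarrow> ('a::{finite,order} \<Rightarrow> 'a)"
  assumes prob: "prob_space M"
    and theta_meas: "(\<lambda>p. \<theta> (fst p) (snd p)) \<in> measurable (borel \<Otimes>\<^sub>M M) M"
    and theta_pres: "\<And>t. distr M M (\<theta> t) = M"
    and theta_0: "\<And>\<omega>. \<omega> \<in> space M \<Longrightarrow> \<theta> 0 \<omega> = \<omega>"
    and theta_add: "\<And>t s \<omega>. \<omega> \<in> space M \<Longrightarrow> \<theta> (t + s) \<omega> = \<theta> t (\<theta> s \<omega>)"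
    and phi_meas: "(\<lambda>p. \<phi> (fst p) (snd p))
                     \<in> measurable (restrict_space borel {0..} \<Otimes>\<^sub>M M) (count_space UNIV)"
    and phi_0: "\<And>\<omega>. \<omega> \<in> space M \<Longrightarrow> \<phi> 0 \<omega> = id"
    and phi_cocycle: "\<And>t s \<omega>. 0 \<le> t \<Longrightarrow> 0 \<le> s \<Longrightarrow> \<omega> \<in> space M \<Longrightarrow>
                        \<phi> (t + s) \<omega> = \<phi> t (\<theta> s \<omega>) \<circ> \<phi> s \<omega>"
    and indep_incr: "\<And>(n::nat) (t::nat \<Rightarrow> real). 0 \<le> t 0 \<Longrightarrow> (\<forall>i<n. t i < t (Suc i)) \<Longrightarrow>
                        prob_space.indep_vars M (\<lambda>_. count_space UNIV)
                          (\<lambda>i \<omega>. \<phi> (t (Suc i) - t i) (\<theta> (t i) \<omega>)) {..<n}"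
    and monotone: "\<And>t \<omega>. 0 \<le> t \<Longrightarrow> \<omega> \<in> space M \<Longrightarrow> mono (\<phi> t \<omega>)"
    and connected: "connected_poset TYPE('a)"
    and one_point_markov: "\<And>x. \<exists>P. markov_chain_from M (\<lambda>t \<omega>. \<phi> t \<omega> x) x P
                                    \<and> irreducible_transition P"
  shows "measure M {\<omega> \<in> space M. coalescence_time \<theta> \<phi> \<omega> < \<infinity>} = 1"
proof -
  interpret P: prob_space M by fact
  define cst :: "('a \<Rightarrow> 'a) \<Rightarrow> bool" where "cst h \<longleftrightarrow> (\<exists>c. \<forall>y. h y = c)" for h
  have th_m: "\<theta> t \<in> measurable M M" for t
  proof -
    have "(\<lambda>\<omega>. (t, \<omega>)) \<in> measurable M (borel \<Otimes>\<^sub>M M)"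
      by (rule measurable_Pair1') simp
    from measurable_comp[OF this theta_meas] show ?thesis by (simp add: comp_def)
  qed
  have th_sp: "\<omega> \<in> space M \<Longrightarrow> \<theta> t \<omega> \<in> space M" for t \<omega>
    using measurable_space[OF th_m] by blast
  have ph_m: "(\<lambda>\<omega>. \<phi> u \<omega>) \<in> measurable M (count_space UNIV)" if "0 \<le> u" for u
  proof -
    have "(\<lambda>\<omega>. (u, \<omega>)) \<in> measurable M (restrict_space borel {0..} \<Otimes>\<^sub>M M)"
      by (rule measurable_Pair1') (simp add: that)
    from measurable_comp[OF this phi_meas] show ?thesis by (simp add: comp_def)
  qed
  have ph_sets: "{\<omega>\<in>space M. Q (\<phi> u \<omega>)} \<in> sets M" if "0 \<le> u" for u Q
  proof -
    have "(\<lambda>\<omega>. \<phi> u \<omega>) -` {h. Q h} \<inter> space M \<in> sets M"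
      by (rule measurable_sets[OF ph_m[OF that]]) simp
    moreover have "(\<lambda>\<omega>. \<phi> u \<omega>) -` {h. Q h} \<inter> space M = {\<omega>\<in>space M. Q (\<phi> u \<omega>)}" by auto
    ultimately show ?thesis by simp
  qed
  have stat: "measure M {\<omega>\<in>space M. Q (\<phi> u (\<theta> s \<omega>))} = measure M {\<omega>\<in>space M. Q (\<phi> u \<omega>)}"
    if "0 \<le> u" for u s Q
  proof -
    have "measure M {\<omega>\<in>space M. Q (\<phi> u \<omega>)} = measure (distr M M (\<theta> s)) {\<omega>\<in>space M. Q (\<phi> u \<omega>)}"
      by (simp add: theta_pres)
    also have "\<dots> = measure M (\<theta> s -` {\<omega>\<in>space M. Q (\<phi> u \<omega>)} \<inter> space M)"
      by (rule measure_distr[OF th_m ph_sets[OF that]])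
    also have "\<theta> s -` {\<omega>\<in>space M. Q (\<phi> u \<omega>)} \<inter> space M = {\<omega>\<in>space M. Q (\<phi> u (\<theta> s \<omega>))}"
      using th_sp by auto
    finally show ?thesis by simp
  qed
  have cst_comp1: "cst f \<Longrightarrow> cst (f \<circ> h)" for f h :: "'a \<Rightarrow> 'a"
    unfolding cst_def by auto
  have cst_comp2: "cst h \<Longrightarrow> cst (f \<circ> h)" for f h :: "'a \<Rightarrow> 'a"
    unfolding cst_def by auto
  have stepA: "\<forall>g::'a\<Rightarrow>'a. mono g \<longrightarrow> card (range g) = n \<longrightarrow>
      (\<exists>u>0. measure M {\<omega>\<in>space M. cst (\<phi> u \<omega> \<circ> g)} > 0)" for n
  proof (induction n rule: nat_less_induct)
    case (1 n)
    show ?case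
    proof (intro allI impI)
      fix g :: "'a \<Rightarrow> 'a" assume mg: "mono g" and cn: "card (range g) = n"
      show "\<exists>u>0. measure M {\<omega>\<in>space M. cst (\<phi> u \<omega> \<circ> g)} > 0"
      proof (cases "\<forall>a b. g a = g b")
        case True
        then have "cst (\<phi> 1 \<omega> \<circ> g)" for \<omega> unfolding cst_def comp_def by metis
        then have "{\<omega>\<in>space M. cst (\<phi> 1 \<omega> \<circ> g)} = space M" by auto
        then show ?thesis by (intro exI[of _ 1]) (simp add: P.prob_space)
      next
        case False
        then obtain a b where "g a \<noteq> g b" by blast
        with chain_lemma[OF _ mg] connected obtain z w where zw: "g z \<noteq> g w" "g z \<le> g w"
          unfolding connected_poset_def by blast
        define x where "x = g z"
        define y where "y = g w"
        obtain m where m: "m \<le> x" "\<And>b. b \<le> m \<Longrightarrow> m = b"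
          using finite_has_minimal2[of UNIV x] by auto
        obtain P where PM: "markov_chain_from M (\<lambda>t \<omega>. \<phi> t \<omega> y) y P" and irr: "irreducible_transition P"
          using one_point_markov by blast
        obtain u where u: "u > 0" "P u y m > 0" using irr unfolding irreducible_transition_def by blast
        have "measure M {\<omega>\<in>space M. \<forall>i\<in>{1..1::nat}. \<phi> ((\<lambda>i::nat. if i = 0 then 0 else u) i) \<omega> y = (\<lambda>i::nat. if i = 0 then y else m) i}
             = (\<Prod>i\<in>{1..1::nat}. P ((\<lambda>i::nat. if i = 0 then 0 else u) i - (\<lambda>i::nat. if i = 0 then 0 else u) (i - 1)) ((\<lambda>i::nat. if i = 0 then y else m) (i - 1)) ((\<lambda>i::nat. if i = 0 then y else m) i))"
          using PM unfolding markov_chain_from_def using u(1) by (intro PM[unfolded markov_chain_from_def, rule_format]) auto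
        then have mE: "measure M {\<omega>\<in>space M. \<phi> u \<omega> y = m} = P u y m" by simp
        have Epos: "measure M {\<omega>\<in>space M. \<phi> u \<omega> y = m} > 0" using mE u by simp
        have U: "{\<omega>\<in>space M. \<phi> u \<omega> y = m} = (\<Union>f\<in>{f. f y = m}. {\<omega>\<in>space M. \<phi> u \<omega> = f})" by auto
        have ph_eq: "{\<omega>\<in>space M. \<phi> u \<omega> = f} \<in> sets M" for f
          using ph_sets[of u "\<lambda>h. h = f"] u(1) by simp
        have "measure M (\<Union>f\<in>{f. f y = m}. {\<omega>\<in>space M. \<phi> u \<omega> = f}) \<le> (\<Sum>f\<in>{f. f y = m}. measure M {\<omega>\<in>space M. \<phi> u \<omega> = f})"
          by (rule measure_subadditive_finite) (auto intro: ph_eq simp: P.emeasure_eq_measure)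
        note sumineq = this
        have "\<exists>f\<in>{f. f y = m}. measure M {\<omega>\<in>space M. \<phi> u \<omega> = f} > 0"
        proof (rule ccontr)
          assume "\<not> ?thesis"
          then have "(\<Sum>f\<in>{f. f y = m}. measure M {\<omega>\<in>space M. \<phi> u \<omega> = f}) \<le> 0"
            by (intro sum_nonpos) (auto simp: not_less)
          with sumineq Epos U show False by simp
        qed
        then obtain f where f: "f y = m" "measure M {\<omega>\<in>space M. \<phi> u \<omega> = f} > 0" by blast
        have "{\<omega>\<in>space M. \<phi> u \<omega> = f} \<noteq> {}"
        proof
          assume e: "{\<omega>\<in>space M. \<phi> u \<omega> = f} = {}"
          have "measure M {\<omega>\<in>space M. \<phi> u \<omega> = f} = 0" by (subst e) simp
          then show False using f(2) by simp
        qed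
        then obtain \<omega>0 where w0: "\<omega>0 \<in> space M" "\<phi> u \<omega>0 = f" by blast
        have mf: "mono f" using monotone[of u \<omega>0] w0 u(1) by simp
        have fxy: "f x = f y"
        proof -
          have "f x \<le> f y" using mf zw(2) x_def y_def by (auto dest: monoD)
          then have "f x \<le> m" using f(1) by simp
          then show ?thesis using m(2) f(1) by metis
        qed
        have mfg: "mono (f \<circ> g)" unfolding mono_def comp_def using mf mg by (simp add: monoD)
        have "\<not> inj_on f (range g)"
          using fxy zw(1) x_def y_def unfolding inj_on_def by blast
        then have "card (f ` range g) \<noteq> card (range g)" using inj_on_iff_eq_card[of "range g" f] by simp
        moreover have "card (f ` range g) \<le> card (range g)" by (rule card_image_le) simp
        ultimately have lt: "card (range (f \<circ> g)) < n" using cn range_composition[of f g] by (simp add: comp_def)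
        obtain u' where u': "u' > 0" "measure M {\<omega>\<in>space M. cst (\<phi> u' \<omega> \<circ> (f \<circ> g))} > 0"
          using "1"[rule_format, OF lt mfg refl] by blast
        define tt :: "nat \<Rightarrow> real" where "tt i = (if i = 0 then 0 else if i = 1 then u else u + u')" for i
        have "\<forall>i<2. tt i < tt (Suc i)" using u(1) u'(1) by (auto simp: tt_def less_Suc_eq numeral_2_eq_2)
        then have ind: "P.indep_vars (\<lambda>_. count_space UNIV) (\<lambda>i \<omega>. \<phi> (tt (Suc i) - tt i) (\<theta> (tt i) \<omega>)) {..<2}"
          using indep_incr[of tt 2] by (simp add: tt_def)
        define AA :: "nat \<Rightarrow> ('a \<Rightarrow> 'a) set" where "AA i = (if i = 0 then {f} else {h. cst (h \<circ> (f \<circ> g))})" for i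
        have H: "measure M (\<Inter>j\<in>{0,1}. {\<omega>\<in>space M. \<phi> (tt (Suc j) - tt j) (\<theta> (tt j) \<omega>) \<in> AA j})
              = (\<Prod>j\<in>{0,1}. measure M {\<omega>\<in>space M. \<phi> (tt (Suc j) - tt j) (\<theta> (tt j) \<omega>) \<in> AA j})"
          by (rule indep_prod_helper[OF prob ind]) auto
        let ?A = "{\<omega>\<in>space M. \<phi> u \<omega> = f}"
        let ?B = "{\<omega>\<in>space M. cst (\<phi> u' (\<theta> u \<omega>) \<circ> (f \<circ> g))}"
        have e0: "{\<omega>\<in>space M. \<phi> (tt (Suc 0) - tt 0) (\<theta> (tt 0) \<omega>) \<in> AA 0} = ?A"
          using theta_0 by (auto simp: tt_def AA_def)
        have e1: "{\<omega>\<in>space M. \<phi> (tt (Suc (Suc 0)) - tt (Suc 0)) (\<theta> (tt (Suc 0)) \<omega>) \<in> AA (Suc 0)} = ?B"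
          by (auto simp: tt_def AA_def)
        have prodAB: "measure M (?A \<inter> ?B) = measure M ?A * measure M ?B"
          using H by (simp only: e0 e1 INT_insert INT_empty prod.insert finite.intros) (simp add: e0 e1)
        have sub: "?A \<inter> ?B \<subseteq> {\<omega>\<in>space M. cst (\<phi> (u' + u) \<omega> \<circ> g)}"
        proof
          fix \<omega> assume w: "\<omega> \<in> ?A \<inter> ?B"
          then have "\<phi> (u' + u) \<omega> = \<phi> u' (\<theta> u \<omega>) \<circ> f"
            using phi_cocycle[of u' u \<omega>] u(1) u'(1) by auto
          then show "\<omega> \<in> {\<omega>\<in>space M. cst (\<phi> (u' + u) \<omega> \<circ> g)}" using w by (simp add: o_assoc)
        qed
        have "measure M (?A \<inter> ?B) \<le> measure M {\<omega>\<in>space M. cst (\<phi> (u' + u) \<omega> \<circ> g)}"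
          by (rule P.finite_measure_mono[OF sub]) (rule ph_sets, use u u' in simp)
        moreover have "measure M ?B = measure M {\<omega>\<in>space M. cst (\<phi> u' \<omega> \<circ> (f \<circ> g))}"
          using stat[of u' "\<lambda>h. cst (h \<circ> (f \<circ> g))" u] u'(1) by simp
        ultimately have "measure M {\<omega>\<in>space M. cst (\<phi> (u' + u) \<omega> \<circ> g)} > 0"
        proof -
          have "measure M ?A * measure M ?B > 0"
            using f(2) u'(2) \<open>measure M ?B = _\<close> by simp
          then show ?thesis using prodAB \<open>measure M (?A \<inter> ?B) \<le> _\<close> by linarith
        qed
        then show ?thesis using u u' by (intro exI[of _ "u' + u"]) simp
      qed
    qed
  qed
  have ph_th_sets: "{\<omega>\<in>space M. Q (\<phi> u (\<theta> s \<omega>))} \<in> sets M" if "0 \<le> u" for u s Q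
  proof -
    have "\<theta> s -` {\<omega>\<in>space M. Q (\<phi> u \<omega>)} \<inter> space M \<in> sets M"
      by (rule measurable_sets[OF th_m ph_sets[OF that]])
    moreover have "\<theta> s -` {\<omega>\<in>space M. Q (\<phi> u \<omega>)} \<inter> space M = {\<omega>\<in>space M. Q (\<phi> u (\<theta> s \<omega>))}"
      using th_sp by auto
    ultimately show ?thesis by simp
  qed
  obtain \<tau> where tau: "\<tau> > 0" "measure M {\<omega>\<in>space M. cst (\<phi> \<tau> \<omega>)} > 0"
    using stepA[of "card (range (id::'a\<Rightarrow>'a))", rule_format, of id] by (auto simp: mono_def)
  define p where "p = measure M {\<omega>\<in>space M. cst (\<phi> \<tau> \<omega>)}"
  have p_le: "p \<le> 1" unfolding p_def by (rule P.prob_le_1)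
  have ppos: "p > 0" using tau p_def by simp
  have p1: "measure M {\<omega>\<in>space M. \<not> cst (\<phi> \<tau> (\<theta> s \<omega>))} = 1 - p" for s
  proof -
    have "measure M {\<omega>\<in>space M. \<not> cst (\<phi> \<tau> (\<theta> s \<omega>))} = measure M {\<omega>\<in>space M. \<not> cst (\<phi> \<tau> \<omega>)}"
      using stat[of \<tau> "\<lambda>h. \<not> cst h" s] tau by simp
    also have "{\<omega>\<in>space M. \<not> cst (\<phi> \<tau> \<omega>)} = space M - {\<omega>\<in>space M. cst (\<phi> \<tau> \<omega>)}" by auto
    also have "measure M \<dots> = 1 - p" unfolding p_def
      by (rule P.prob_compl) (rule ph_sets, use tau in simp)
    finally show ?thesis .
  qed
  have chain: "\<omega> \<in> space M \<Longrightarrow> (\<exists>i<k. cst (\<phi> \<tau> (\<theta> (real i * \<tau>) \<omega>))) \<Longrightarrow> cst (\<phi> (real k * \<tau>) \<omega>)" for k \<omega>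
  proof (induction k)
    case 0 then show ?case by simp
  next
    case (Suc k)
    have e: "real (Suc k) * \<tau> = \<tau> + real k * \<tau>" by (simp add: algebra_simps)
    have dec: "\<phi> (real (Suc k) * \<tau>) \<omega> = \<phi> \<tau> (\<theta> (real k * \<tau>) \<omega>) \<circ> \<phi> (real k * \<tau>) \<omega>"
      unfolding e using phi_cocycle[of \<tau> "real k * \<tau>" \<omega>] Suc.prems(1) tau(1) by simp
    from Suc.prems(2) obtain i where i: "i < Suc k" "cst (\<phi> \<tau> (\<theta> (real i * \<tau>) \<omega>))" by blast
    show ?case
    proof (cases "i = k")
      case True then show ?thesis using dec i cst_comp1 by metis
    next
      case False
      then have "cst (\<phi> (real k * \<tau>) \<omega>)" using Suc.IH Suc.prems(1) i by (metis less_SucE)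
      then show ?thesis using dec cst_comp2 by metis
    qed
  qed
  have bnd: "measure M {\<omega>\<in>space M. \<not> cst (\<phi> (real k * \<tau>) \<omega>)} \<le> (1 - p) ^ k" if kpos: "k > 0" for k
  proof -
    define tt :: "nat \<Rightarrow> real" where "tt i = real i * \<tau>" for i
    have "\<forall>i<k. tt i < tt (Suc i)" using tau(1) by (simp add: tt_def algebra_simps)
    then have ind: "P.indep_vars (\<lambda>_. count_space UNIV) (\<lambda>i \<omega>. \<phi> (tt (Suc i) - tt i) (\<theta> (tt i) \<omega>)) {..<k}"
      using indep_incr[of tt k] by (simp add: tt_def)
    have X: "\<phi> (tt (Suc i) - tt i) (\<theta> (tt i) \<omega>) = \<phi> \<tau> (\<theta> (real i * \<tau>) \<omega>)" for i \<omega>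
      by (simp add: tt_def algebra_simps)
    have H: "measure M (\<Inter>j\<in>{..<k}. {\<omega>\<in>space M. \<phi> (tt (Suc j) - tt j) (\<theta> (tt j) \<omega>) \<in> {h. \<not> cst h}})
      = (\<Prod>j\<in>{..<k}. measure M {\<omega>\<in>space M. \<phi> (tt (Suc j) - tt j) (\<theta> (tt j) \<omega>) \<in> {h. \<not> cst h}})"
      by (rule indep_prod_helper[OF prob ind]) (use kpos in auto)
    then have H2: "measure M (\<Inter>j\<in>{..<k}. {\<omega>\<in>space M. \<not> cst (\<phi> \<tau> (\<theta> (real j * \<tau>) \<omega>))}) = (1 - p) ^ k"
      by (simp add: X p1)
    have sub: "{\<omega>\<in>space M. \<not> cst (\<phi> (real k * \<tau>) \<omega>)} \<subseteq> (\<Inter>j\<in>{..<k}. {\<omega>\<in>space M. \<not> cst (\<phi> \<tau> (\<theta> (real j * \<tau>) \<omega>))})"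
      using chain kpos by blast
    have meas: "(\<Inter>j\<in>{..<k}. {\<omega>\<in>space M. \<not> cst (\<phi> \<tau> (\<theta> (real j * \<tau>) \<omega>))}) \<in> sets M"
      by (rule sets.finite_INT) (use kpos tau in \<open>auto intro: ph_th_sets\<close>)
    show ?thesis using P.finite_measure_mono[OF sub meas] H2 by simp
  qed
  have Bk: "measure M {\<omega>\<in>space M. cst (\<phi> (real k * \<tau>) (\<theta> (-(real k * \<tau>)) \<omega>))} \<ge> 1 - (1 - p) ^ k"
    if kpos: "k > 0" for k
  proof -
    have "measure M {\<omega>\<in>space M. cst (\<phi> (real k * \<tau>) (\<theta> (-(real k * \<tau>)) \<omega>))}
        = measure M {\<omega>\<in>space M. cst (\<phi> (real k * \<tau>) \<omega>)}"
      using stat[of "real k * \<tau>" cst "-(real k * \<tau>)"] tau by simp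
    also have "{\<omega>\<in>space M. cst (\<phi> (real k * \<tau>) \<omega>)} = space M - {\<omega>\<in>space M. \<not> cst (\<phi> (real k * \<tau>) \<omega>)}" by auto
    also have "measure M \<dots> = 1 - measure M {\<omega>\<in>space M. \<not> cst (\<phi> (real k * \<tau>) \<omega>)}"
      by (rule P.prob_compl) (rule ph_sets, use tau in simp)
    finally show ?thesis using bnd[OF kpos] by simp
  qed
  have ct: "coalescence_time \<theta> \<phi> \<omega> < \<infinity> \<longleftrightarrow> (\<exists>t>0. cst (\<phi> t (\<theta> (-t) \<omega>)))" for \<omega>
  proof
    assume "coalescence_time \<theta> \<phi> \<omega> < \<infinity>"
    then show "\<exists>t>0. cst (\<phi> t (\<theta> (-t) \<omega>))"
      unfolding coalescence_time_def cst_def by (cases "{t::real. t > 0 \<and> (\<exists>c. \<forall>y. \<phi> t (\<theta> (-t) \<omega>) y = c)} = {}") (auto simp: top_ereal_def)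
  next
    assume "\<exists>t>0. cst (\<phi> t (\<theta> (-t) \<omega>))"
    then obtain t where t: "t > 0" "cst (\<phi> t (\<theta> (-t) \<omega>))" by blast
    have "coalescence_time \<theta> \<phi> \<omega> \<le> ereal t"
      unfolding coalescence_time_def by (rule INF_lower) (use t in \<open>simp add: cst_def\<close>)
    moreover have "ereal t < \<infinity>" by simp
    ultimately show "coalescence_time \<theta> \<phi> \<omega> < \<infinity>" by (rule order_le_less_trans)
  qed
  define Bs where "Bs k = {\<omega>\<in>space M. cst (\<phi> (real k * \<tau>) (\<theta> (-(real k * \<tau>)) \<omega>))}" for k :: nat
  have Seq: "{\<omega> \<in> space M. coalescence_time \<theta> \<phi> \<omega> < \<infinity>} = (\<Union>k. Bs (Suc k))"
  proof (intro equalityI subsetI)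
    fix \<omega> assume "\<omega> \<in> {\<omega> \<in> space M. coalescence_time \<theta> \<phi> \<omega> < \<infinity>}"
    then have w: "\<omega> \<in> space M" and "\<exists>t>0. cst (\<phi> t (\<theta> (-t) \<omega>))" using ct by auto
    then obtain t where t: "t > 0" "cst (\<phi> t (\<theta> (-t) \<omega>))" by blast
    obtain n where n: "t < real n * \<tau>" using ex_less_of_nat_mult[OF tau(1)] by blast
    then have "n \<noteq> 0" using t(1) by (cases n) auto
    then obtain k where k: "n = Suc k" by (cases n) auto
    define s where "s = real n * \<tau>"
    have w': "\<theta> (-s) \<omega> \<in> space M" using th_sp w by blast
    have "\<theta> (s - t) (\<theta> (-s) \<omega>) = \<theta> (-t) \<omega>"
      using theta_add[of \<omega> "s - t" "-s", symmetric] w by simp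
    moreover have "\<phi> s (\<theta> (-s) \<omega>) = \<phi> t (\<theta> (s - t) (\<theta> (-s) \<omega>)) \<circ> \<phi> (s - t) (\<theta> (-s) \<omega>)"
      using phi_cocycle[of t "s - t" "\<theta> (-s) \<omega>"] w' t(1) n s_def by simp
    ultimately have "cst (\<phi> s (\<theta> (-s) \<omega>))" using t(2) cst_comp1 by metis
    then show "\<omega> \<in> (\<Union>k. Bs (Suc k))" using w k s_def unfolding Bs_def by auto
  next
    fix \<omega> assume "\<omega> \<in> (\<Union>k. Bs (Suc k))"
    then obtain k where "\<omega> \<in> Bs (Suc k)" by blast
    then have w: "\<omega> \<in> space M" and c: "cst (\<phi> (real (Suc k) * \<tau>) (\<theta> (-(real (Suc k) * \<tau>)) \<omega>))"
      unfolding Bs_def by auto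
    have "real (Suc k) * \<tau> > 0" using tau(1) by simp
    then have "coalescence_time \<theta> \<phi> \<omega> < \<infinity>" using ct c by blast
    then show "\<omega> \<in> {\<omega> \<in> space M. coalescence_time \<theta> \<phi> \<omega> < \<infinity>}" using w by simp
  qed
  have Bmeas: "Bs k \<in> sets M" for k
    unfolding Bs_def by (rule ph_th_sets) (use tau in simp)
  have Smeas: "{\<omega> \<in> space M. coalescence_time \<theta> \<phi> \<omega> < \<infinity>} \<in> sets M"
    unfolding Seq using Bmeas by auto
  define mm where "mm = measure M {\<omega> \<in> space M. coalescence_time \<theta> \<phi> \<omega> < \<infinity>}"
  have mm1: "mm \<le> 1" unfolding mm_def by (rule P.prob_le_1)
  have mmk: "1 - (1 - p) ^ Suc k \<le> mm" for k
  proof -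
    have "Bs (Suc k) \<subseteq> {\<omega> \<in> space M. coalescence_time \<theta> \<phi> \<omega> < \<infinity>}" unfolding Seq by blast
    from P.finite_measure_mono[OF this Smeas] have "measure M (Bs (Suc k)) \<le> mm" unfolding mm_def .
    moreover have "1 - (1 - p) ^ Suc k \<le> measure M (Bs (Suc k))" unfolding Bs_def by (rule Bk) simp
    ultimately show ?thesis by linarith
  qed
  show ?thesis
  proof (rule ccontr)
    assume "\<not> ?thesis"
    then have "mm \<noteq> 1" unfolding mm_def .
    with mm1 have "mm < 1" by simp
    then obtain k where k: "(1 - p) ^ k < 1 - mm" using real_arch_pow_inv[of "1 - mm" "1 - p"] ppos by auto
    have "mm \<ge> 0" unfolding mm_def by simp
    then have "k \<noteq> 0" using k by (cases k) auto
    then obtain j where "k = Suc j" by (cases k) auto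
    then show False using k mmk[of j] by simp
  qed
qed

end
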